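(* Let $n,k$ be positive integers with $\gcd(n,k)=1$. (a) Let $N=3n+k$ and suppose $n+k\neq N/2$. Then the geometric realization of $C(n,n,n+k)$ is homeomorphic to a cylinder if $N$ is even and to a Möbius band if $N$ is odd. (b) Let $N=3n+2k$. Then the geometric realization of $C(n,n+k,n+k)$ is homeomorphic to a cylinder if $N$ is even and to a Möbius band if $N$ is odd.
   Context: For positive integers $n_1\le n_2\le n_3$ with $N=n_1+n_2+n_3$, $C(n_1,n_2,n_3)$ denotes the abstract simplicial complex whose vertex set is $\mathbb{Z}/N$, whose 2-simplices are all sets of the form $\{k,k+n_1,k+n_1+n_2\}$ or $\{k,k-n_1,k-n_1-n_2\}$ for $k\in\mathbb{Z}/N$ (the orbit of $\{0,n_1,n_1+n_2\}$ under translations and inversions of $\mathbb{Z}/N$), and whose 1-simplices are all sets $\{k,k+n_i\}$ with $k\in\mathbb{Z}/N$, $i\in\{1,2,3\}$. Cylinder means $S^1\times[0,1]$. *)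

theory Defs
  imports "HOL-Analysis.Analysis"
begin

text \<open>Vertices of Z/N are represented by the integers 0..N-1 (residues k mod N).\<close>

definition circ_complex :: "nat \<Rightarrow> nat \<Rightarrow> nat \<Rightarrow> int set set" where
  "circ_complex n1 n2 n3 =
    (let N = int (n1 + n2 + n3) in
      {{k mod N} | k. True}
    \<union> {{k mod N, (k + int ni) mod N} | k ni. ni \<in> {n1, n2, n3}}
    \<union> {{k mod N, (k + int n1) mod N, (k + int n1 + int n2) mod N} | k. True}
    \<union> {{k mod N, (k - int n1) mod N, (k - int n1 - int n2) mod N} | k. True})"

text \<open>Standard geometric realization of an abstract simplicial complex with (finite)
  simplices given as vertex sets: points are barycentric coordinate functions
  supported on some simplex, with the (product) topology of functions to the reals.\<close>

definition geom_real :: "'v set set \<Rightarrow> ('v \<Rightarrow> real) set" where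
  "geom_real K = {f. \<exists>\<sigma>\<in>K. (\<forall>v. v \<notin> \<sigma> \<longrightarrow> f v = 0) \<and> (\<forall>v. 0 \<le> f v) \<and> sum f \<sigma> = 1}"

definition cylinder :: "(complex \<times> real) set" where
  "cylinder = sphere 0 1 \<times> {0..1}"

definition moebius_band :: "(real \<times> real \<times> real) set" where
  "moebius_band = (\<lambda>(s, t). ((2 + t * cos (s / 2)) * cos s,
                              (2 + t * cos (s / 2)) * sin s,
                              t * sin (s / 2))) ` ({0..2 * pi} \<times> {-1..1})"

end

theory Submission
  imports Defs
begin



lemma quotient_homeo:
  fixes P :: "'a::t2_space \<Rightarrow> 'b::t2_space" and G :: "'a \<Rightarrow> 'c::t2_space"
  assumes D: "compact D" and cP: "continuous_on D P" and cG: "continuous_on D G"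
    and fib: "\<And>p q. p\<in>D \<Longrightarrow> q\<in>D \<Longrightarrow> P p = P q \<longleftrightarrow> G p = G q"
  shows "P ` D homeomorphic G ` D"
proof -
  define H where "H a = G (SOME p. p \<in> D \<and> P p = a)" for a
  have HP: "H (P p) = G p" if "p \<in> D" for p
  proof -
    have "(SOME q. q \<in> D \<and> P q = P p) \<in> D \<and> P (SOME q. q \<in> D \<and> P q = P p) = P p"
      by (rule someI[of _ p]) (use that in auto)
    then show ?thesis unfolding H_def using fib that by blast
  qed
  have img: "H ` (P ` D) = G ` D" using HP by (force simp: image_iff)
  have inj: "inj_on H (P ` D)"
    using HP fib by (smt (verit, ccfv_SIG) image_iff inj_onI)
  have cont: "continuous_on (P ` D) H"
    unfolding continuous_on_closed
  proof (intro allI impI)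
    fix T assume T: "closedin (top_of_set (H ` P ` D)) T"
    have eq: "P ` D \<inter> H -` T = P ` (D \<inter> G -` T)" using HP by auto
    have "closedin (top_of_set D) (D \<inter> G -` T)"
      using continuous_on_closed cG T img by metis
    then show "closedin (top_of_set (P ` D)) (P ` D \<inter> H -` T)"
      unfolding eq using Abstract_Topology_2.continuous_imp_closed_map[OF _ cP refl D] by blast
  qed
  show ?thesis
    using homeomorphic_compact[OF compact_continuous_image[OF cP D] cont img inj] .
qed

lemma geom_real_relabel:
  fixes p q :: "int \<Rightarrow> int"
  assumes qp: "\<And>x. q (p x) = x" and pq: "\<And>x. p (q x) = x"
  shows "geom_real K homeomorphic geom_real ((`) p ` K)"
proof -
  have injp: "inj_on p S" for S by (metis qp inj_onI)
  have A: "(\<lambda>f. f \<circ> q) ` geom_real K = geom_real ((`) p ` K)"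
  proof (intro equalityI subsetI)
    fix g assume "g \<in> (\<lambda>f. f \<circ> q) ` geom_real K"
    then obtain f \<sigma> where g: "g = f \<circ> q" and s: "\<sigma> \<in> K" "\<forall>v. v \<notin> \<sigma> \<longrightarrow> f v = 0" "\<forall>v. 0 \<le> f v" "sum f \<sigma> = 1"
      unfolding geom_real_def by auto
    have "sum g (p ` \<sigma>) = sum (g \<circ> p) \<sigma>" by (rule sum.reindex[OF injp])
    also have "\<dots> = sum f \<sigma>" unfolding g by (simp add: o_def qp)
    finally have 1: "sum g (p ` \<sigma>) = 1" using s(4) by simp
    have 2: "\<forall>v. v \<notin> p ` \<sigma> \<longrightarrow> g v = 0"
    proof (intro allI impI)
      fix v assume "v \<notin> p ` \<sigma>"
      then have "q v \<notin> \<sigma>" by (metis image_eqI pq)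
      then show "g v = 0" using s(2) g by simp
    qed
    have 3: "\<forall>v. 0 \<le> g v" using s(3) g by simp
    show "g \<in> geom_real ((`) p ` K)" unfolding geom_real_def
      using 1 2 3 s(1) by blast
  next
    fix g assume "g \<in> geom_real ((`) p ` K)"
    then obtain \<sigma> where s: "\<sigma> \<in> K" "\<forall>v. v \<notin> p ` \<sigma> \<longrightarrow> g v = 0" "\<forall>v. 0 \<le> g v" "sum g (p ` \<sigma>) = 1"
      unfolding geom_real_def by auto
    have 1: "sum (g \<circ> p) \<sigma> = 1" using s(4) sum.reindex[OF injp, of g \<sigma>] by simp
    have 2: "\<forall>v. v \<notin> \<sigma> \<longrightarrow> (g \<circ> p) v = 0"
    proof (intro allI impI)
      fix v assume "v \<notin> \<sigma>"
      then have "p v \<notin> p ` \<sigma>" by (metis image_iff qp)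
      then show "(g \<circ> p) v = 0" using s(2) by simp
    qed
    have 3: "\<forall>v. 0 \<le> (g \<circ> p) v" using s(3) by simp
    have "g \<circ> p \<in> geom_real K" unfolding geom_real_def using 1 2 3 s(1) by blast
    moreover have "g = (g \<circ> p) \<circ> q" by (simp add: fun_eq_iff pq)
    ultimately show "g \<in> (\<lambda>f. f \<circ> q) ` geom_real K" by blast
  qed
  have B: "(\<lambda>f. f \<circ> p) ` geom_real ((`) p ` K) = geom_real K"
  proof -
    have "(\<lambda>f. f \<circ> p) ` geom_real ((`) p ` K) = (\<lambda>f. f \<circ> p) ` (\<lambda>f. f \<circ> q) ` geom_real K"
      by (simp only: A)
    also have "\<dots> = (\<lambda>f. f \<circ> q \<circ> p) ` geom_real K" by (simp add: image_image)
    also have "\<dots> = geom_real K"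
    proof -
      have "(\<lambda>f::int\<Rightarrow>real. f \<circ> q \<circ> p) = (\<lambda>f. f)" by (simp add: fun_eq_iff qp)
      then show ?thesis by (simp only: image_ident)
    qed
    finally show ?thesis .
  qed
  have c1: "continuous_on S (\<lambda>f::int\<Rightarrow>real. f \<circ> r)" for S and r :: "int \<Rightarrow> int"
  proof (rule continuous_on_coordinatewise_then_product)
    fix i show "continuous_on S (\<lambda>f::int\<Rightarrow>real. (f \<circ> r) i)"
      unfolding o_def by (rule continuous_on_subset[OF continuous_on_product_coordinates]) simp
  qed
  have "homeomorphism (geom_real K) (geom_real ((`) p ` K)) (\<lambda>f. f \<circ> q) (\<lambda>f. f \<circ> p)"
    unfolding homeomorphism_def
  proof (intro conjI ballI)
    show "(\<lambda>f. f \<circ> q) ` geom_real K = geom_real ((`) p ` K)" by (rule A)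
    show "(\<lambda>f. f \<circ> p) ` geom_real ((`) p ` K) = geom_real K" by (rule B)
  qed (simp_all add: c1 fun_eq_iff qp pq)
  then show ?thesis unfolding homeomorphic_def by blast
qed




definition hh :: "int \<Rightarrow> real \<Rightarrow> real" where
  "hh v y = (if even v then 1 - y else y)"

definition phi :: "int \<Rightarrow> real \<Rightarrow> real \<Rightarrow> real" where
  "phi v x y = max 0 (min (hh v y) ((1 + hh v y - \<bar>x - of_int v\<bar>) / 2))"

definition rep :: "int \<Rightarrow> real \<Rightarrow> real \<Rightarrow> real \<Rightarrow> real \<times> real" where
  "rep a \<alpha> \<beta> \<gamma> = (of_int a + \<beta> + 2 * \<gamma>, if even a then \<beta> else \<alpha> + \<gamma>)"

lemma hh_shift: "hh v y = (if even (v - a) then hh a y else 1 - hh a y)"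
  unfolding hh_def by auto

lemma hh_rep:
  assumes "\<alpha> + \<beta> + \<gamma> = 1"
  shows "hh a (snd (rep a \<alpha> \<beta> \<gamma>)) = \<alpha> + \<gamma>"
  using assms unfolding hh_def rep_def by auto

lemma phi_rep:
  assumes nn: "0 \<le> \<alpha>" "0 \<le> \<beta>" "0 \<le> \<gamma>" and s: "\<alpha> + \<beta> + \<gamma> = 1"
  shows "phi v (fst (rep a \<alpha> \<beta> \<gamma>)) (snd (rep a \<alpha> \<beta> \<gamma>)) =
    (if v = a then \<alpha> else if v = a + 1 then \<beta> else if v = a + 2 then \<gamma> else 0)"
proof -
  define x where "x = fst (rep a \<alpha> \<beta> \<gamma>)"
  define y where "y = snd (rep a \<alpha> \<beta> \<gamma>)"
  have hx: "x = of_int a + \<beta> + 2 * \<gamma>" unfolding x_def rep_def by simp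
  have ha: "hh a y = \<alpha> + \<gamma>" unfolding y_def using hh_rep[OF s] .
  have hv: "hh v y = (if even (v - a) then \<alpha> + \<gamma> else \<beta>)"
    using hh_shift[of v y a] ha s by auto
  have "v = a \<or> v = a + 1 \<or> v = a + 2 \<or> v = a - 1 \<or> v = a + 3 \<or> v \<le> a - 2 \<or> v \<ge> a + 4" by linarith
  then have "phi v x y = (if v = a then \<alpha> else if v = a + 1 then \<beta> else if v = a + 2 then \<gamma> else 0)"
  proof (elim disjE)
    assume v: "v = a"
    show ?thesis using v hv hx nn s unfolding phi_def by (auto simp: abs_if)
  next
    assume v: "v = a + 1"
    show ?thesis using v hv hx nn s unfolding phi_def by (auto simp: abs_if)
  next
    assume v: "v = a + 2"
    show ?thesis using v hv hx nn s unfolding phi_def by (auto simp: abs_if)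
  next
    assume v: "v = a - 1"
    show ?thesis using v hv hx nn s unfolding phi_def by (auto simp: abs_if)
  next
    assume v: "v = a + 3"
    show ?thesis using v hv hx nn s unfolding phi_def by (auto simp: abs_if)
  next
    assume v: "v \<le> a - 2"
    then have "real_of_int v \<le> of_int a - 2" by linarith
    moreover have "hh v y \<le> 1" using hv nn s by auto
    ultimately have "(1 + hh v y - \<bar>x - of_int v\<bar>) / 2 \<le> 0" using hx nn by (auto simp: abs_if)
    then show ?thesis using v unfolding phi_def by (auto simp: max_def min_def)
  next
    assume v: "v \<ge> a + 4"
    then have "real_of_int v \<ge> of_int a + 4" by linarith
    moreover have "hh v y \<le> 1" using hv nn s by auto
    ultimately have "(1 + hh v y - \<bar>x - of_int v\<bar>) / 2 \<le> 0" using hx nn s by (auto simp: abs_if)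
    then show ?thesis using v unfolding phi_def by (auto simp: max_def min_def)
  qed
  then show ?thesis unfolding x_def y_def .
qed

lemma decomp:
  assumes "0 \<le> x" "x \<le> of_int N" "0 \<le> y" "y \<le> 1"
  shows "\<exists>a \<alpha> \<beta> \<gamma>. -1 \<le> a \<and> a \<le> N \<and> 0 \<le> \<alpha> \<and> 0 \<le> \<beta> \<and> 0 \<le> \<gamma> \<and> \<alpha> + \<beta> + \<gamma> = 1
           \<and> (x, y) = rep a \<alpha> \<beta> \<gamma>"
proof -
  define m where "m = \<lfloor>x\<rfloor>"
  define t where "t = x - of_int m"
  define \<eta> where "\<eta> = hh m y"
  have t: "0 \<le> t" "t < 1" unfolding t_def m_def by linarith+
  have m: "0 \<le> m" "m \<le> N" unfolding m_def using assms by (auto simp: floor_le_iff le_floor_iff)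
  have eta: "0 \<le> \<eta>" "\<eta> \<le> 1" unfolding \<eta>_def hh_def using assms by auto
  show ?thesis
  proof (cases "t + \<eta> \<ge> 1")
    case True
    define \<gamma> where "\<gamma> = (t - 1 + \<eta>) / 2"
    show ?thesis
    proof (intro exI conjI)
      show "-1 \<le> m" "m \<le> N" using m by auto
      show "0 \<le> \<eta> - \<gamma>" "0 \<le> 1 - \<eta>" "0 \<le> \<gamma>" using True t eta unfolding \<gamma>_def by auto
      show "\<eta> - \<gamma> + (1 - \<eta>) + \<gamma> = 1" by simp
      show "(x, y) = rep m (\<eta> - \<gamma>) (1 - \<eta>) \<gamma>"
        unfolding rep_def \<gamma>_def using t_def \<eta>_def by (auto simp: hh_def field_simps)
    qed
  next
    case False
    define \<gamma> where "\<gamma> = (t + 1 - \<eta>) / 2"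
    show ?thesis
    proof (intro exI conjI)
      show "-1 \<le> m - 1" "m - 1 \<le> N" using m by auto
      show "0 \<le> 1 - \<eta> - \<gamma>" "0 \<le> \<eta>" "0 \<le> \<gamma>" using False t eta unfolding \<gamma>_def by auto
      show "1 - \<eta> - \<gamma> + \<eta> + \<gamma> = 1" by simp
      show "(x, y) = rep (m - 1) (1 - \<eta> - \<gamma>) \<eta> \<gamma>"
        unfolding rep_def \<gamma>_def using t_def \<eta>_def by (auto simp: hh_def field_simps)
    qed
  qed
qed




definition Phi :: "int \<Rightarrow> real \<times> real \<Rightarrow> int \<Rightarrow> real" where
  "Phi N p u = (\<Sum>v\<in>{-N..2*N}. if v mod N = u then phi v (fst p) (snd p) else 0)"

definition tri :: "int \<Rightarrow> int \<Rightarrow> real \<Rightarrow> real \<Rightarrow> real \<Rightarrow> int \<Rightarrow> real" where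
  "tri N a \<alpha> \<beta> \<gamma> u = (if a mod N = u then \<alpha> else 0) + (if (a+1) mod N = u then \<beta> else 0)
      + (if (a+2) mod N = u then \<gamma> else 0)"

lemma Phi_rep:
  assumes nn: "0 \<le> \<alpha>" "0 \<le> \<beta>" "0 \<le> \<gamma>" and s: "\<alpha> + \<beta> + \<gamma> = 1"
    and a: "-N \<le> a" "a + 2 \<le> 2 * N"
  shows "Phi N (rep a \<alpha> \<beta> \<gamma>) = tri N a \<alpha> \<beta> \<gamma>"
proof (rule ext)
  fix u
  define F where "F v = (if v mod N = u then (if v = a then \<alpha> else if v = a + 1 then \<beta> else if v = a + 2 then \<gamma> else 0) else 0)" for v
  have "Phi N (rep a \<alpha> \<beta> \<gamma>) u = (\<Sum>v\<in>{-N..2*N}. F v)"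
    unfolding Phi_def F_def by (simp only: phi_rep[OF nn s])
  also have "\<dots> = (\<Sum>v\<in>{a, a+1, a+2}. F v)"
    by (rule sum.mono_neutral_right) (use a in \<open>auto simp: F_def\<close>)
  also have "\<dots> = tri N a \<alpha> \<beta> \<gamma> u"
    by (simp add: F_def tri_def)
  finally show "Phi N (rep a \<alpha> \<beta> \<gamma>) u = tri N a \<alpha> \<beta> \<gamma> u" .
qed

lemma dvd_small_zero:
  fixes z N :: int
  assumes "5 \<le> N" "N dvd z" "\<bar>z\<bar> \<le> 4"
  shows "z = 0"
proof (rule ccontr)
  assume "z \<noteq> 0"
  then have "\<bar>N\<bar> \<le> \<bar>z\<bar>" using dvd_imp_le_int assms(2) by blast
  then show False using assms by linarith
qed

lemma res_distinct:
  fixes N a :: int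
  assumes "3 \<le> N"
  shows "(a+1) mod N \<noteq> a mod N" "(a+2) mod N \<noteq> a mod N" "(a+2) mod N \<noteq> (a+1) mod N"
proof -
  have h: "x mod N \<noteq> y mod N" if "x - y = 1 \<or> x - y = 2" for x y :: int
  proof
    assume "x mod N = y mod N"
    then have "N dvd x - y" by (simp add: mod_eq_dvd_iff)
    moreover have "x - y \<noteq> 0" using that by auto
    ultimately have "\<bar>N\<bar> \<le> \<bar>x - y\<bar>" using dvd_imp_le_int by blast
    then show False using that assms by linarith
  qed
  show "(a+1) mod N \<noteq> a mod N" "(a+2) mod N \<noteq> a mod N" "(a+2) mod N \<noteq> (a+1) mod N"
    using h by auto
qed

lemma tri_shift: "tri N (a - N) \<alpha> \<beta> \<gamma> = tri N a \<alpha> \<beta> \<gamma>"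
proof -
  have "(a - N + j) mod N = (a + j) mod N" for j :: int
    by (simp add: mod_eq_dvd_iff)
  from this[of 0] this[of 1] this[of 2] show ?thesis
    unfolding tri_def by (simp add: fun_eq_iff)
qed

lemma sum_delta_mult:
  assumes "c \<in> S" "finite S"
  shows "(\<Sum>u\<in>S. (if c = u then x else 0) * w u) = (x::real) * w c"
proof -
  have "(\<Sum>u\<in>S. (if c = u then x else 0) * w u) = (\<Sum>u\<in>S. if c = u then x * w u else 0)"
    by (rule sum.cong) auto
  also have "\<dots> = x * w c" using assms by (simp add: sum.delta)
  finally show ?thesis .
qed

lemma tri_sum:
  assumes "0 < N"
  shows "(\<Sum>u\<in>{0..<N}. tri N a \<alpha> \<beta> \<gamma> u * w u) = \<alpha> * w (a mod N) + \<beta> * w ((a+1) mod N) + \<gamma> * w ((a+2) mod N)"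
proof -
  have m: "x mod N \<in> {0..<N}" for x using assms by simp
  have "(\<Sum>u\<in>{0..<N}. tri N a \<alpha> \<beta> \<gamma> u * w u) =
     (\<Sum>u\<in>{0..<N}. (if a mod N = u then \<alpha> else 0) * w u) + (\<Sum>u\<in>{0..<N}. (if (a+1) mod N = u then \<beta> else 0) * w u)
     + (\<Sum>u\<in>{0..<N}. (if (a+2) mod N = u then \<gamma> else 0) * w u)"
    unfolding tri_def by (simp only: sum.distrib distrib_right)
  also have "\<dots> = \<alpha> * w (a mod N) + \<beta> * w ((a+1) mod N) + \<gamma> * w ((a+2) mod N)"
    using sum_delta_mult[OF m] by simp
  finally show ?thesis .
qed

definition lf :: "int \<Rightarrow> int \<Rightarrow> int \<Rightarrow> int" where
  "lf N b u = b + (u - b) mod N"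

lemma lf_eq:
  assumes "0 < N" "b \<le> v" "v < b + N"
  shows "lf N b (v mod N) = v"
proof -
  have "(v mod N - b) mod N = (v - b) mod N" by (simp add: mod_diff_left_eq)
  also have "\<dots> = v - b" using assms by (simp add: mod_pos_pos_trivial)
  finally show ?thesis unfolding lf_def by simp
qed

lemma lf_mod: "lf N b u mod N = u mod N"
  unfolding lf_def by (metis add.commute diff_add_cancel mod_add_left_eq)

definition par :: "int \<Rightarrow> real" where "par v = (if even v then 0 else 1)"

lemma tri_moments:
  assumes N: "3 < N" and s: "\<alpha> + \<beta> + \<gamma> = 1" and b: "b \<le> a" "a + 2 < b + N"
  shows "(\<Sum>u\<in>{0..<N}. tri N a \<alpha> \<beta> \<gamma> u) = 1"
    "(\<Sum>u\<in>{0..<N}. tri N a \<alpha> \<beta> \<gamma> u * of_int (lf N b u)) = fst (rep a \<alpha> \<beta> \<gamma>)"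
    "(\<Sum>u\<in>{0..<N}. tri N a \<alpha> \<beta> \<gamma> u * par (lf N b u)) = snd (rep a \<alpha> \<beta> \<gamma>)"
proof -
  have l0: "lf N b (a mod N) = a" and l1: "lf N b ((a+1) mod N) = a + 1" and l2: "lf N b ((a+2) mod N) = a + 2"
    using lf_eq[of N b] N b by auto
  show "(\<Sum>u\<in>{0..<N}. tri N a \<alpha> \<beta> \<gamma> u) = 1"
    using tri_sum[of N a \<alpha> \<beta> \<gamma> "\<lambda>_. 1"] N s by simp
  show "(\<Sum>u\<in>{0..<N}. tri N a \<alpha> \<beta> \<gamma> u * of_int (lf N b u)) = fst (rep a \<alpha> \<beta> \<gamma>)"
  proof -
    have "(\<Sum>u\<in>{0..<N}. tri N a \<alpha> \<beta> \<gamma> u * of_int (lf N b u)) = \<alpha> * of_int a + \<beta> * of_int (a+1) + \<gamma> * of_int (a+2)"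
      using tri_sum[of N a \<alpha> \<beta> \<gamma> "\<lambda>u. of_int (lf N b u)"] N l0 l1 l2 by simp
    also have "\<dots> = (\<alpha>+\<beta>+\<gamma>) * of_int a + \<beta> + 2 * \<gamma>" by (simp add: algebra_simps)
    also have "\<dots> = fst (rep a \<alpha> \<beta> \<gamma>)" using s by (simp add: rep_def)
    finally show ?thesis .
  qed
  have "(\<Sum>u\<in>{0..<N}. tri N a \<alpha> \<beta> \<gamma> u * par (lf N b u)) = \<alpha> * par a + \<beta> * par (a+1) + \<gamma> * par (a+2)"
    using tri_sum[of N a \<alpha> \<beta> \<gamma> "\<lambda>u. par (lf N b u)"] N l0 l1 l2 by simp
  also have "\<dots> = snd (rep a \<alpha> \<beta> \<gamma>)"
    by (simp add: par_def rep_def)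
  finally show "(\<Sum>u\<in>{0..<N}. tri N a \<alpha> \<beta> \<gamma> u * par (lf N b u)) = snd (rep a \<alpha> \<beta> \<gamma>)" .
qed




definition flip :: "int \<Rightarrow> real \<Rightarrow> real" where
  "flip N y = (if even N then y else 1 - y)"

lemma tri_supp:
  assumes "tri N a \<alpha> \<beta> \<gamma> u \<noteq> 0"
  shows "u = a mod N \<or> u = (a+1) mod N \<or> u = (a+2) mod N"
  using assms unfolding tri_def by (auto split: if_splits)

lemma par_diff: "par (v - d) = (if even d then par v else 1 - par v)"
  unfolding par_def by auto

lemma supp_lf:
  assumes N: "3 < N" and F: "tri N a \<alpha> \<beta> \<gamma> u \<noteq> 0"
  shows "u \<in> {0..<N}" "a \<le> lf N (a-1) u" "lf N (a-1) u \<le> a + 2"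
proof -
  have "\<exists>j\<in>{0,1,2}. u = (a + j) mod N" using tri_supp[OF F] by auto
  then obtain j where j: "j \<in> {0,1,2}" "u = (a + j) mod N" by blast
  show "u \<in> {0..<N}" using j N by simp
  have "lf N (a-1) u = a + j" unfolding j(2) by (rule lf_eq) (use N j in auto)
  then show "a \<le> lf N (a-1) u" "lf N (a-1) u \<le> a + 2" using j by auto
qed

lemma fiber:
  assumes N: "5 \<le> N"
    and nn: "0 \<le> \<alpha>" "0 \<le> \<beta>" "0 \<le> \<gamma>" "\<alpha> + \<beta> + \<gamma> = 1"
    and nn': "0 \<le> \<alpha>'" "0 \<le> \<beta>'" "0 \<le> \<gamma>'" "\<alpha>' + \<beta>' + \<gamma>' = 1"
    and eq: "tri N a \<alpha> \<beta> \<gamma> = tri N a' \<alpha>' \<beta>' \<gamma>'"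
    and x: "0 \<le> fst (rep a \<alpha> \<beta> \<gamma>)" "fst (rep a \<alpha> \<beta> \<gamma>) \<le> of_int N"
      "0 \<le> fst (rep a' \<alpha>' \<beta>' \<gamma>')" "fst (rep a' \<alpha>' \<beta>' \<gamma>') \<le> of_int N"
  shows "rep a \<alpha> \<beta> \<gamma> = rep a' \<alpha>' \<beta>' \<gamma>'
    \<or> (fst (rep a \<alpha> \<beta> \<gamma>) = 0 \<and> fst (rep a' \<alpha>' \<beta>' \<gamma>') = of_int N \<and> snd (rep a' \<alpha>' \<beta>' \<gamma>') = flip N (snd (rep a \<alpha> \<beta> \<gamma>)))
    \<or> (fst (rep a' \<alpha>' \<beta>' \<gamma>') = 0 \<and> fst (rep a \<alpha> \<beta> \<gamma>) = of_int N \<and> snd (rep a \<alpha> \<beta> \<gamma>) = flip N (snd (rep a' \<alpha>' \<beta>' \<gamma>')))"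
proof -
  define F where "F = tri N a \<alpha> \<beta> \<gamma>"
  define \<delta> where "\<delta> u = lf N (a-1) u - lf N (a'-1) u" for u
  define x where "x = fst (rep a \<alpha> \<beta> \<gamma>)"
  define y where "y = snd (rep a \<alpha> \<beta> \<gamma>)"
  define x' where "x' = fst (rep a' \<alpha>' \<beta>' \<gamma>')"
  define y' where "y' = snd (rep a' \<alpha>' \<beta>' \<gamma>')"
  have N3: "3 < N" using N by simp
  have F': "F = tri N a' \<alpha>' \<beta>' \<gamma>'" using eq F_def by simp
  have bnd: "a - a' - 2 \<le> \<delta> u \<and> \<delta> u \<le> a - a' + 2" if "F u \<noteq> 0" for u
    using supp_lf[OF N3, of a \<alpha> \<beta> \<gamma> u] supp_lf[OF N3, of a' \<alpha>' \<beta>' \<gamma>' u] that F' F_def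
    unfolding \<delta>_def by auto
  have dv: "N dvd \<delta> u" for u
    unfolding \<delta>_def by (simp add: mod_eq_dvd_iff[symmetric] lf_mod)
  have sum1: "(\<Sum>u\<in>{0..<N}. F u) = 1" unfolding F_def by (rule tri_moments(1)) (use N nn in auto)
  obtain u0 where u0: "F u0 \<noteq> 0"
  proof (rule ccontr)
    assume "\<not> thesis"
    then have "\<forall>u. F u = 0" using that by blast
    then show False using sum1 by simp
  qed
  define d where "d = \<delta> u0"
  have dd: "\<delta> u = d" if "F u \<noteq> 0" for u
  proof -
    have "N dvd \<delta> u - d" unfolding d_def using dv by (simp add: dvd_diff)
    moreover have "\<bar>\<delta> u - d\<bar> \<le> 4" using bnd[OF that] bnd[OF u0] unfolding d_def by linarith
    ultimately show ?thesis using dvd_small_zero[OF N] by fastforce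
  qed
  have ex: "x = (\<Sum>u\<in>{0..<N}. F u * of_int (lf N (a-1) u))"
    unfolding x_def F_def by (rule tri_moments(2)[symmetric]) (use N nn in auto)
  have ey: "y = (\<Sum>u\<in>{0..<N}. F u * par (lf N (a-1) u))"
    unfolding y_def F_def by (rule tri_moments(3)[symmetric]) (use N nn in auto)
  have ex': "x' = (\<Sum>u\<in>{0..<N}. F u * of_int (lf N (a'-1) u))"
    unfolding x'_def F' by (rule tri_moments(2)[symmetric]) (use N nn' in auto)
  have ey': "y' = (\<Sum>u\<in>{0..<N}. F u * par (lf N (a'-1) u))"
    unfolding y'_def F' by (rule tri_moments(3)[symmetric]) (use N nn' in auto)
  have l': "lf N (a'-1) u = lf N (a-1) u - d" if "F u \<noteq> 0" for u
    using dd[OF that] unfolding \<delta>_def by simp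
  have "x' = (\<Sum>u\<in>{0..<N}. F u * of_int (lf N (a-1) u) - F u * of_int d)"
  proof -
    have "F u * of_int (lf N (a'-1) u) = F u * of_int (lf N (a-1) u) - F u * of_int d" for u
      by (cases "F u = 0") (simp_all add: l' algebra_simps)
    then show ?thesis unfolding ex' by simp
  qed
  also have "\<dots> = x - of_int d" unfolding ex by (simp add: sum_subtractf sum_distrib_right[symmetric] sum1)
  finally have xd: "x' = x - of_int d" .
  have "y' = (\<Sum>u\<in>{0..<N}. if even d then F u * par (lf N (a-1) u) else F u - F u * par (lf N (a-1) u))"
  proof -
    have "F u * par (lf N (a'-1) u) = (if even d then F u * par (lf N (a-1) u) else F u - F u * par (lf N (a-1) u))" for u
      by (cases "F u = 0") (simp_all add: l' par_diff algebra_simps)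
    then show ?thesis unfolding ey' by simp
  qed
  also have "\<dots> = (if even d then y else 1 - y)"
    unfolding ey by (simp add: sum_subtractf sum1)
  finally have yd: "y' = (if even d then y else 1 - y)" .
  obtain c where c: "d = N * c" using dv[of u0] unfolding d_def by (auto simp: dvd_def)
  have "\<bar>of_int d\<bar> \<le> (of_int N :: real)" using xd x unfolding x_def x'_def by linarith
  then have "\<bar>d\<bar> \<le> N" by linarith
  then have "\<bar>c\<bar> \<le> 1" unfolding c using N by (simp add: abs_mult)
  then have "c = 0 \<or> c = 1 \<or> c = -1" by linarith
  then show ?thesis
  proof (elim disjE)
    assume "c = 0"
    then have "x' = x" "y' = y" using xd yd c by auto
    then show ?thesis using x_def x'_def y_def y'_def by (simp add: prod_eq_iff)
  next
    assume c1: "c = 1"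
    then have "x' = x - of_int N" using xd c by simp
    then have "x = of_int N" "x' = 0" using x unfolding x_def x'_def by linarith+
    moreover have "y = flip N y'" using yd c c1 unfolding flip_def by auto
    ultimately show ?thesis unfolding x_def x'_def y_def y'_def by blast
  next
    assume c1: "c = -1"
    then have "x' = x + of_int N" using xd c by simp
    then have "x = 0" "x' = of_int N" using x unfolding x_def x'_def by linarith+
    moreover have "y' = flip N y" using yd c c1 unfolding flip_def by auto
    ultimately show ?thesis unfolding x_def x'_def y_def y'_def by blast
  qed
qed




lemma tri_mem:
  assumes "2 \<le> n"
  shows "{k mod int n, (k+1) mod int n, (k+2) mod int n} \<in> circ_complex 1 1 (n - 2)"
proof -
  have e: "int (1 + 1 + (n - 2)) = int n" using assms by simp
  have "{k mod int n, (k+1) mod int n, (k+2) mod int n} = {k mod int n, (k + int 1) mod int n, (k + int 1 + int 1) mod int n}"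
    by (simp add: add.assoc)
  then show ?thesis unfolding circ_complex_def Let_def e by blast
qed

lemma sub_tri:
  assumes "2 \<le> n" "\<sigma> \<in> circ_complex 1 1 (n - 2)"
  shows "\<exists>k. \<sigma> \<subseteq> {k mod int n, (k+1) mod int n, (k+2) mod int n}"
proof -
  define N where "N = int n"
  have e: "int (1 + 1 + (n - 2)) = N" using assms N_def by simp
  have e2: "int (n - 2) = N - 2" using assms N_def by simp
  from assms(2) have "(\<exists>k. \<sigma> = {k mod N}) \<or> (\<exists>k ni. ni \<in> {1, 1, n - 2} \<and> \<sigma> = {k mod N, (k + int ni) mod N})
     \<or> (\<exists>k. \<sigma> = {k mod N, (k + int 1) mod N, (k + int 1 + int 1) mod N})
     \<or> (\<exists>k. \<sigma> = {k mod N, (k - int 1) mod N, (k - int 1 - int 1) mod N})"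
    unfolding circ_complex_def Let_def e Un_iff mem_Collect_eq by (elim disjE exE conjE; blast)
  then have "\<exists>k. \<sigma> \<subseteq> {k mod N, (k+1) mod N, (k+2) mod N}"
  proof (elim disjE exE conjE)
    fix k assume "\<sigma> = {k mod N}" then show ?thesis by (intro exI[of _ k]) simp
  next
    fix k ni assume ni: "ni \<in> {1, 1, n - 2}" and s: "\<sigma> = {k mod N, (k + int ni) mod N}"
    show ?thesis
    proof (cases "ni = 1")
      case True then show ?thesis using s by (intro exI[of _ k]) simp
    next
      case False
      then have i: "int ni = N - 2" using ni e2 by auto
      have h1: "(k + int ni) mod N = (k + N - 2) mod N" unfolding i by (simp add: algebra_simps)
      have h2: "k mod N = (k + N - 2 + 2) mod N" by simp
      have "\<sigma> \<subseteq> {(k + N - 2) mod N, (k + N - 2 + 1) mod N, (k + N - 2 + 2) mod N}"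
        unfolding s h1 using h2 by simp
      then show ?thesis by (rule exI)
    qed
  next
    fix k assume s: "\<sigma> = {k mod N, (k + int 1) mod N, (k + int 1 + int 1) mod N}"
    then have "\<sigma> \<subseteq> {k mod N, (k+1) mod N, (k+2) mod N}" by (simp add: add.assoc)
    then show ?thesis by (rule exI)
  next
    fix k assume s: "\<sigma> = {k mod N, (k - int 1) mod N, (k - int 1 - int 1) mod N}"
    have h1: "(k - int 1) mod N = (k - 2 + 1) mod N" by (simp add: algebra_simps)
    have h2: "(k - int 1 - int 1) mod N = (k - 2) mod N" by (simp add: algebra_simps)
    have h3: "k mod N = (k - 2 + 2) mod N" by simp
    have "\<sigma> \<subseteq> {(k-2) mod N, (k-2+1) mod N, (k-2+2) mod N}"
      unfolding s h1 h2 using h3 by simp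
    then show ?thesis by (rule exI)
  qed
  then show ?thesis unfolding N_def .
qed

lemma tri_sum3:
  assumes "3 \<le> N"
  shows "sum (tri N a \<alpha> \<beta> \<gamma>) {a mod N, (a+1) mod N, (a+2) mod N} = \<alpha> + \<beta> + \<gamma>"
  using res_distinct[OF assms, of a] by (simp add: tri_def eq_commute)

lemma tri_geom:
  assumes n: "5 \<le> n" and nn: "0 \<le> \<alpha>" "0 \<le> \<beta>" "0 \<le> \<gamma>" "\<alpha> + \<beta> + \<gamma> = 1"
  shows "tri (int n) a \<alpha> \<beta> \<gamma> \<in> geom_real (circ_complex 1 1 (n - 2))"
  unfolding geom_real_def
proof (intro CollectI bexI conjI allI impI)
  show "{a mod int n, (a+1) mod int n, (a+2) mod int n} \<in> circ_complex 1 1 (n - 2)"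
    using tri_mem n by simp
  fix v
  show "v \<notin> {a mod int n, (a+1) mod int n, (a+2) mod int n} \<Longrightarrow> tri (int n) a \<alpha> \<beta> \<gamma> v = 0"
    using tri_supp by blast
  show "0 \<le> tri (int n) a \<alpha> \<beta> \<gamma> v" using nn unfolding tri_def by auto
next
  show "sum (tri (int n) a \<alpha> \<beta> \<gamma>) {a mod int n, (a+1) mod int n, (a+2) mod int n} = 1"
    using tri_sum3[of "int n" a] n nn by simp
qed




definition Dom :: "nat \<Rightarrow> (real \<times> real) set" where
  "Dom n = {0..real n} \<times> {0..1}"

lemma Phi_image_sub:
  assumes n: "5 \<le> n" and p: "p \<in> Dom n"
  shows "Phi (int n) p \<in> geom_real (circ_complex 1 1 (n - 2))"
proof -
  obtain x y where xy: "p = (x, y)" by fastforce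
  have b: "0 \<le> x" "x \<le> of_int (int n)" "0 \<le> y" "y \<le> 1" using p xy by (auto simp: Dom_def)
  obtain a \<alpha> \<beta> \<gamma> where r: "-1 \<le> a" "a \<le> int n" "0 \<le> \<alpha>" "0 \<le> \<beta>" "0 \<le> \<gamma>" "\<alpha> + \<beta> + \<gamma> = 1"
    "(x, y) = rep a \<alpha> \<beta> \<gamma>" using decomp[OF b] by blast
  have "Phi (int n) p = tri (int n) a \<alpha> \<beta> \<gamma>"
    unfolding xy r(7) by (rule Phi_rep) (use r n in auto)
  then show ?thesis using tri_geom[OF n r(3-6)] by simp
qed

lemma geom_sub_Phi_image:
  assumes n: "5 \<le> n" and f: "f \<in> geom_real (circ_complex 1 1 (n - 2))"
  shows "f \<in> Phi (int n) ` Dom n"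
proof -
  define N where "N = int n"
  have N5: "5 \<le> N" using n N_def by simp
  obtain \<sigma> where s: "\<sigma> \<in> circ_complex 1 1 (n - 2)" "\<forall>v. v \<notin> \<sigma> \<longrightarrow> f v = 0" "\<forall>v. 0 \<le> f v" "sum f \<sigma> = 1"
    using f unfolding geom_real_def by blast
  obtain k where k: "\<sigma> \<subseteq> {k mod N, (k+1) mod N, (k+2) mod N}" using sub_tri[OF _ s(1)] n N_def by auto
  define a where "a = k mod N"
  have a: "0 \<le> a" "a < N" unfolding a_def using N5 by auto
  have T: "{k mod N, (k+1) mod N, (k+2) mod N} = {a mod N, (a+1) mod N, (a+2) mod N}"
    unfolding a_def by (simp add: mod_add_left_eq)
  define T where "T = {a mod N, (a+1) mod N, (a+2) mod N}"
  have sT: "\<sigma> \<subseteq> T" using k T T_def by simp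
  have zero: "f v = 0" if "v \<notin> T" for v using s(2) sT that by blast
  define \<alpha> where "\<alpha> = f (a mod N)"
  define \<beta> where "\<beta> = f ((a+1) mod N)"
  define \<gamma> where "\<gamma> = f ((a+2) mod N)"
  have d: "(a+1) mod N \<noteq> a mod N" "(a+2) mod N \<noteq> a mod N" "(a+2) mod N \<noteq> (a+1) mod N"
    using res_distinct[of N a] N5 by auto
  have d': "a mod N \<noteq> (a+1) mod N" "a mod N \<noteq> (a+2) mod N" "(a+1) mod N \<noteq> (a+2) mod N"
    using d by auto
  have finT: "finite T" by (simp add: T_def)
  have z2: "\<forall>i\<in>T - \<sigma>. f i = 0" using s(2) by blast
  have "sum f \<sigma> = sum f T"
    by (rule sum.mono_neutral_left[OF finT sT z2])
  also have "\<dots> = \<alpha> + \<beta> + \<gamma>" unfolding T_def \<alpha>_def \<beta>_def \<gamma>_def using d by simp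
  finally have s1: "\<alpha> + \<beta> + \<gamma> = 1" using s(4) by simp
  have nn: "0 \<le> \<alpha>" "0 \<le> \<beta>" "0 \<le> \<gamma>" using s(3) unfolding \<alpha>_def \<beta>_def \<gamma>_def by auto
  have ftri: "f = tri N a \<alpha> \<beta> \<gamma>"
  proof (rule ext)
    fix u
    show "f u = tri N a \<alpha> \<beta> \<gamma> u"
    proof (cases "u \<in> T")
      case True
      then consider "u = a mod N" | "u = (a+1) mod N" | "u = (a+2) mod N" unfolding T_def by blast
      then show ?thesis
      proof cases
        case 1 then show ?thesis unfolding \<alpha>_def tri_def using d d' by simp
      next
        case 2 then show ?thesis unfolding \<beta>_def tri_def using d d' by simp
      next
        case 3 then show ?thesis unfolding \<gamma>_def tri_def using d d' by simp
      qed
    next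
      case False
      then have "u \<noteq> a mod N" "u \<noteq> (a+1) mod N" "u \<noteq> (a+2) mod N" unfolding T_def by auto
      then have "a mod N \<noteq> u" "(a+1) mod N \<noteq> u" "(a+2) mod N \<noteq> u" by auto
      then show ?thesis using zero[OF False] unfolding tri_def by simp
    qed
  qed
  show ?thesis
  proof (cases "of_int a + \<beta> + 2 * \<gamma> \<le> real n")
    case True
    have D: "rep a \<alpha> \<beta> \<gamma> \<in> Dom n" using True a nn s1 unfolding Dom_def rep_def by auto
    have "Phi N (rep a \<alpha> \<beta> \<gamma>) = f" unfolding ftri
      by (rule Phi_rep) (use nn s1 a in auto)
    then have "f = Phi (int n) (rep a \<alpha> \<beta> \<gamma>)" unfolding N_def by simp
    then show ?thesis using D by (rule image_eqI)
  next
    case False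
    have D: "rep (a - N) \<alpha> \<beta> \<gamma> \<in> Dom n" using False a nn s1 N_def unfolding Dom_def rep_def by auto
    have "Phi N (rep (a - N) \<alpha> \<beta> \<gamma>) = tri N (a - N) \<alpha> \<beta> \<gamma>"
      by (rule Phi_rep) (use nn s1 a in auto)
    then have "Phi N (rep (a - N) \<alpha> \<beta> \<gamma>) = f" unfolding ftri tri_shift .
    then have "f = Phi (int n) (rep (a - N) \<alpha> \<beta> \<gamma>)" unfolding N_def by simp
    then show ?thesis using D by (rule image_eqI)
  qed
qed

lemma Phi_image:
  assumes n: "5 \<le> n"
  shows "Phi (int n) ` Dom n = geom_real (circ_complex 1 1 (n - 2))"
  using Phi_image_sub[OF n] geom_sub_Phi_image[OF n] by blast

lemma phi_cont: "continuous_on S (\<lambda>p. phi v (fst p) (snd p))"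
  unfolding phi_def hh_def by (cases "even v") (auto intro!: continuous_intros)

lemma Phi_cont: "continuous_on S (Phi N)"
proof (rule continuous_on_coordinatewise_then_product)
  fix u
  show "continuous_on S (\<lambda>p. Phi N p u)"
    unfolding Phi_def
  proof (rule continuous_on_sum)
    fix v
    show "continuous_on S (\<lambda>p. if v mod N = u then phi v (fst p) (snd p) else 0)"
      by (cases "v mod N = u") (simp_all add: phi_cont)
  qed
qed

definition R :: "int \<Rightarrow> real \<times> real \<Rightarrow> real \<times> real \<Rightarrow> bool" where
  "R N p q \<longleftrightarrow> p = q \<or> (fst p = 0 \<and> fst q = of_int N \<and> snd q = flip N (snd p))
     \<or> (fst q = 0 \<and> fst p = of_int N \<and> snd p = flip N (snd q))"

lemma Phi_boundary:
  assumes n: "5 \<le> n" and y: "0 \<le> y" "y \<le> 1"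
  shows "Phi (int n) (0, y) = Phi (int n) (real n, flip (int n) y)"
proof -
  define N where "N = int n"
  obtain a \<alpha> \<beta> \<gamma> where r: "-1 \<le> a" "a \<le> N" "0 \<le> \<alpha>" "0 \<le> \<beta>" "0 \<le> \<gamma>" "\<alpha> + \<beta> + \<gamma> = 1"
    "(0, y) = rep a \<alpha> \<beta> \<gamma>" using decomp[of 0 N y] y n N_def by auto
  have a0: "a \<le> 0" using r unfolding rep_def by auto
  have q: "(real n, flip N y) = rep (a + N) \<alpha> \<beta> \<gamma>"
  proof -
    have x: "of_int a + \<beta> + 2 * \<gamma> = 0" and yy: "y = (if even a then \<beta> else \<alpha> + \<gamma>)"
      using r(7) unfolding rep_def by auto
    show ?thesis unfolding rep_def flip_def using x yy r(6) N_def by auto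
  qed
  have "Phi N (0, y) = tri N a \<alpha> \<beta> \<gamma>" unfolding r(7) by (rule Phi_rep) (use r n N_def in auto)
  moreover have "Phi N (real n, flip N y) = tri N (a + N) \<alpha> \<beta> \<gamma>"
    unfolding q by (rule Phi_rep) (use r a0 n N_def in auto)
  moreover have "tri N (a + N) \<alpha> \<beta> \<gamma> = tri N a \<alpha> \<beta> \<gamma>" using tri_shift[of N "a + N"] by simp
  ultimately show ?thesis unfolding N_def by simp
qed

lemma flip_flip: "flip N (flip N y) = y" unfolding flip_def by auto

lemma Phi_fiber:
  assumes n: "5 \<le> n" and p: "p \<in> Dom n" and q: "q \<in> Dom n"
  shows "Phi (int n) p = Phi (int n) q \<longleftrightarrow> R (int n) p q"
proof
  define N where "N = int n"
  assume eq: "Phi (int n) p = Phi (int n) q"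
  obtain x y where xy: "p = (x, y)" by fastforce
  have b: "0 \<le> x" "x \<le> of_int N" "0 \<le> y" "y \<le> 1" using p xy N_def by (auto simp: Dom_def)
  obtain a \<alpha> \<beta> \<gamma> where r: "-1 \<le> a" "a \<le> N" "0 \<le> \<alpha>" "0 \<le> \<beta>" "0 \<le> \<gamma>" "\<alpha> + \<beta> + \<gamma> = 1"
    "(x, y) = rep a \<alpha> \<beta> \<gamma>" using decomp[OF b] by blast
  obtain x' y' where xy': "q = (x', y')" by fastforce
  have b': "0 \<le> x'" "x' \<le> of_int N" "0 \<le> y'" "y' \<le> 1" using q xy' N_def by (auto simp: Dom_def)
  obtain a' \<alpha>' \<beta>' \<gamma>' where r': "-1 \<le> a'" "a' \<le> N" "0 \<le> \<alpha>'" "0 \<le> \<beta>'" "0 \<le> \<gamma>'" "\<alpha>' + \<beta>' + \<gamma>' = 1"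
    "(x', y') = rep a' \<alpha>' \<beta>' \<gamma>'" using decomp[OF b'] by blast
  have "Phi N (x, y) = tri N a \<alpha> \<beta> \<gamma>" unfolding r(7) by (rule Phi_rep) (use r n N_def in auto)
  moreover have "Phi N (x', y') = tri N a' \<alpha>' \<beta>' \<gamma>'" unfolding r'(7) by (rule Phi_rep) (use r' n N_def in auto)
  ultimately have "tri N a \<alpha> \<beta> \<gamma> = tri N a' \<alpha>' \<beta>' \<gamma>'" using eq xy xy' N_def by simp
  note te = this
  have N5: "5 \<le> N" using n N_def by simp
  have fx: "fst (rep a \<alpha> \<beta> \<gamma>) = x" "fst (rep a' \<alpha>' \<beta>' \<gamma>') = x'"
    using r(7) r'(7) by (metis fst_conv)+
  have F: "rep a \<alpha> \<beta> \<gamma> = rep a' \<alpha>' \<beta>' \<gamma>'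
    \<or> (fst (rep a \<alpha> \<beta> \<gamma>) = 0 \<and> fst (rep a' \<alpha>' \<beta>' \<gamma>') = of_int N \<and> snd (rep a' \<alpha>' \<beta>' \<gamma>') = flip N (snd (rep a \<alpha> \<beta> \<gamma>)))
    \<or> (fst (rep a' \<alpha>' \<beta>' \<gamma>') = 0 \<and> fst (rep a \<alpha> \<beta> \<gamma>) = of_int N \<and> snd (rep a \<alpha> \<beta> \<gamma>) = flip N (snd (rep a' \<alpha>' \<beta>' \<gamma>')))"
    by (rule fiber[OF N5 r(3-6) r'(3-6) te]) (use b b' fx in auto)
  show "R (int n) p q" using F unfolding r(7)[symmetric] r'(7)[symmetric] R_def xy xy' N_def .
next
  assume "R (int n) p q"
  then consider "p = q" | "fst p = 0 \<and> fst q = of_int (int n) \<and> snd q = flip (int n) (snd p)"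
    | "fst q = 0 \<and> fst p = of_int (int n) \<and> snd p = flip (int n) (snd q)" unfolding R_def by blast
  then show "Phi (int n) p = Phi (int n) q"
  proof cases
    case 1 then show ?thesis by simp
  next
    case 2
    then have "p = (0, snd p)" "q = (real n, flip (int n) (snd p))" by (simp_all add: prod_eq_iff)
    moreover have "0 \<le> snd p" "snd p \<le> 1" using p by (auto simp: Dom_def)
    ultimately show ?thesis using Phi_boundary[OF n] by metis
  next
    case 3
    then have "q = (0, snd q)" "p = (real n, flip (int n) (snd q))" by (simp_all add: prod_eq_iff)
    moreover have "0 \<le> snd q" "snd q \<le> 1" using q by (auto simp: Dom_def)
    ultimately show ?thesis using Phi_boundary[OF n] by metis
  qed
qed




lemma trig_inj:
  assumes s: "0 \<le> s" "s \<le> 2*pi" "0 \<le> s'" "s' \<le> 2*pi" and e: "cos s = cos s'" "sin s = sin s'"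
  shows "s = s' \<or> (s = 0 \<and> s' = 2*pi) \<or> (s = 2*pi \<and> s' = 0)"
proof -
  obtain m :: int where m: "s = s' + 2 * pi * m" using sin_cos_eq_iff e by blast
  have "\<bar>2 * pi * m\<bar> \<le> 2 * pi" using m s by linarith
  then have "\<bar>real_of_int m\<bar> \<le> 1" by (simp add: abs_mult)
  then have "m = 0 \<or> m = 1 \<or> m = -1" by linarith
  then show ?thesis using m s by auto
qed

definition gE :: "nat \<Rightarrow> real \<times> real \<Rightarrow> complex \<times> real" where
  "gE n p = (cis ((2 * pi / real n) * fst p), snd p)"

definition Mb :: "real \<times> real \<Rightarrow> real \<times> real \<times> real" where
  "Mb = (\<lambda>(s, t). ((2 + t * cos (s / 2)) * cos s, (2 + t * cos (s / 2)) * sin s, t * sin (s / 2)))"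

definition gO :: "nat \<Rightarrow> real \<times> real \<Rightarrow> real \<times> real \<times> real" where
  "gO n p = Mb ((2 * pi / real n) * fst p, 2 * snd p - 1)"

lemma lin_cont: "continuous_on S (\<lambda>p::real\<times>real. (c * fst p, 2 * snd p - 1))"
  by (intro continuous_intros)

lemma Mb_cont: "continuous_on S Mb"
  unfolding Mb_def case_prod_beta by (intro continuous_intros) auto

lemma gE_cont: "continuous_on S (gE n)"
proof -
  have "continuous_on S (\<lambda>p::real\<times>real. (cis (c * fst p), snd p))" for c
    by (intro continuous_intros)
  then show ?thesis unfolding gE_def .
qed

lemma gO_cont: "continuous_on S (gO n)"
proof -
  have "continuous_on S (Mb \<circ> (\<lambda>p::real\<times>real. (c * fst p, 2 * snd p - 1)))" for c
    by (rule continuous_on_compose[OF lin_cont Mb_cont])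
  then show ?thesis unfolding gO_def o_def .
qed

lemma scale_range:
  assumes "0 < n" "0 \<le> x" "x \<le> real n"
  shows "0 \<le> (2 * pi / real n) * x" "(2 * pi / real n) * x \<le> 2 * pi"
  using assms by (auto simp: field_simps)

lemma gE_image:
  assumes n: "0 < n"
  shows "gE n ` Dom n = cylinder"
proof (intro equalityI subsetI)
  fix z assume "z \<in> gE n ` Dom n"
  then show "z \<in> cylinder" unfolding gE_def Dom_def cylinder_def by auto
next
  fix z assume "z \<in> cylinder"
  then obtain w y where z: "z = (w, y)" "norm w = 1" "0 \<le> y" "y \<le> 1"
    unfolding cylinder_def by auto
  have "(Re w)\<^sup>2 + (Im w)\<^sup>2 = 1" using z(2) cmod_power2[of w] by simp
  then obtain t where t: "0 \<le> t" "t < 2 * pi" "Re w = cos t" "Im w = sin t"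
    using sincos_total_2pi by blast
  define x where "x = t * real n / (2 * pi)"
  have x: "0 \<le> x" "x \<le> real n" using t n unfolding x_def by (auto simp: field_simps)
  have "(2 * pi / real n) * x = t" unfolding x_def using n by (simp add: field_simps)
  then have "gE n (x, y) = z" unfolding gE_def z(1) using t by (simp add: complex_eq_iff)
  moreover have "(x, y) \<in> Dom n" using x z unfolding Dom_def by auto
  ultimately show "z \<in> gE n ` Dom n" by (metis image_eqI)
qed

lemma gO_image:
  assumes n: "0 < n"
  shows "gO n ` Dom n = moebius_band"
proof -
  have mb: "moebius_band = Mb ` ({0..2 * pi} \<times> {-1..1})" unfolding moebius_band_def Mb_def ..
  have L: "(\<lambda>p. ((2 * pi / real n) * fst p, 2 * snd p - 1)) ` Dom n = {0..2 * pi} \<times> {-1..1}"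
  proof (intro equalityI subsetI)
    fix q assume "q \<in> (\<lambda>p. ((2 * pi / real n) * fst p, 2 * snd p - 1)) ` Dom n"
    then obtain p where p: "p \<in> Dom n" "q = ((2 * pi / real n) * fst p, 2 * snd p - 1)" by blast
    then have "0 \<le> fst p" "fst p \<le> real n" "0 \<le> snd p" "snd p \<le> 1" unfolding Dom_def by auto
    then show "q \<in> {0..2 * pi} \<times> {-1..1}" using scale_range[OF n] p(2) by auto
  next
    fix q :: "real \<times> real" assume "q \<in> {0..2 * pi} \<times> {-1..1}"
    then obtain s t where q: "q = (s, t)" "0 \<le> s" "s \<le> 2 * pi" "-1 \<le> t" "t \<le> 1" by auto
    define x where "x = s * real n / (2 * pi)"
    have x: "0 \<le> x" "x \<le> real n" using q n unfolding x_def by (auto simp: field_simps)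
    have "(2 * pi / real n) * x = s" unfolding x_def using n by (simp add: field_simps)
    then have "q = (\<lambda>p. ((2 * pi / real n) * fst p, 2 * snd p - 1)) (x, (t + 1) / 2)" using q by (simp add: field_simps)
    moreover have "(x, (t + 1) / 2) \<in> Dom n" using x q unfolding Dom_def by auto
    ultimately show "q \<in> (\<lambda>p. ((2 * pi / real n) * fst p, 2 * snd p - 1)) ` Dom n" by (rule image_eqI)
  qed
  have "gO n ` Dom n = Mb ` ((\<lambda>p. ((2 * pi / real n) * fst p, 2 * snd p - 1)) ` Dom n)"
    unfolding gO_def image_image ..
  then show ?thesis unfolding L mb .
qed




lemma scale_eq:
  assumes "0 < n"
  shows "(2 * pi / real n) * x = (2 * pi / real n) * x' \<longleftrightarrow> x = x'"
    "(2 * pi / real n) * x = 0 \<longleftrightarrow> x = 0"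
    "(2 * pi / real n) * x = 2 * pi \<longleftrightarrow> x = real n"
  using assms by (auto simp: field_simps)

lemma gE_fiber:
  assumes n: "5 \<le> n" "even n" and p: "p \<in> Dom n" and q: "q \<in> Dom n"
  shows "gE n p = gE n q \<longleftrightarrow> R (int n) p q"
proof -
  obtain x y where xy: "p = (x, y)" by fastforce
  obtain x' y' where xy': "q = (x', y')" by fastforce
  have b: "0 \<le> x" "x \<le> real n" "0 \<le> x'" "x' \<le> real n" using p q xy xy' by (auto simp: Dom_def)
  have n0: "0 < n" using n by simp
  have fl: "flip (int n) z = z" for z using n(2) unfolding flip_def by simp
  define s where "s = (2 * pi / real n) * x"
  define s' where "s' = (2 * pi / real n) * x'"
  have sr: "0 \<le> s" "s \<le> 2 * pi" "0 \<le> s'" "s' \<le> 2 * pi"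
    using scale_range[OF n0] b unfolding s_def s'_def by auto
  have "gE n p = gE n q \<longleftrightarrow> cis s = cis s' \<and> y = y'"
    unfolding gE_def xy xy' s_def s'_def by simp
  also have "\<dots> \<longleftrightarrow> (s = s' \<or> (s = 0 \<and> s' = 2*pi) \<or> (s = 2*pi \<and> s' = 0)) \<and> y = y'"
  proof -
    have "cis s = cis s' \<longleftrightarrow> (s = s' \<or> (s = 0 \<and> s' = 2*pi) \<or> (s = 2*pi \<and> s' = 0))"
    proof
      assume "cis s = cis s'"
      then have "cos s = cos s'" "sin s = sin s'" by (metis cis.sel)+
      then show "s = s' \<or> (s = 0 \<and> s' = 2*pi) \<or> (s = 2*pi \<and> s' = 0)" using trig_inj sr by blast
    next
      assume "s = s' \<or> (s = 0 \<and> s' = 2*pi) \<or> (s = 2*pi \<and> s' = 0)"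
      then show "cis s = cis s'" by (auto simp: complex_eq_iff)
    qed
    then show ?thesis by simp
  qed
  also have "\<dots> \<longleftrightarrow> R (int n) p q"
    unfolding R_def xy xy' fl s_def s'_def scale_eq[OF n0] by auto
  finally show ?thesis .
qed

lemma Mb_inj:
  assumes s: "0 \<le> s" "s \<le> 2*pi" "0 \<le> s'" "s' \<le> 2*pi" and t: "-1 \<le> t" "t \<le> 1" "-1 \<le> t'" "t' \<le> 1"
  shows "Mb (s, t) = Mb (s', t') \<longleftrightarrow> (s = s' \<and> t = t') \<or> (s = 0 \<and> s' = 2*pi \<and> t' = -t) \<or> (s = 2*pi \<and> s' = 0 \<and> t' = -t)"
proof
  define r where "r = 2 + t * cos (s / 2)"
  define r' where "r' = 2 + t' * cos (s' / 2)"
  have r1: "1 \<le> r"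
  proof -
    have "\<bar>t * cos (s / 2)\<bar> \<le> 1" using t abs_cos_le_one[of "s/2"] by (simp add: abs_mult mult_le_one)
    then show ?thesis unfolding r_def by linarith
  qed
  have r1': "1 \<le> r'"
  proof -
    have "\<bar>t' * cos (s' / 2)\<bar> \<le> 1" using t abs_cos_le_one[of "s'/2"] by (simp add: abs_mult mult_le_one)
    then show ?thesis unfolding r'_def by linarith
  qed
  assume "Mb (s, t) = Mb (s', t')"
  then have e1: "r * cos s = r' * cos s'" and e2: "r * sin s = r' * sin s'" and e3: "t * sin (s/2) = t' * sin (s'/2)"
    unfolding Mb_def r_def r'_def by auto
  have sq: "z^2 = (z * cos a)^2 + (z * sin a)^2" for z a :: real
    by (simp add: power_mult_distrib algebra_simps flip: distrib_left) 
  have "r^2 = r'^2" using sq[of r s] sq[of r' s'] e1 e2 by simp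
  then have rr: "r = r'" using r1 r1' by (simp add: power2_eq_iff_nonneg)
  have cs: "cos s = cos s'" "sin s = sin s'" using e1 e2 rr r1 by auto
  from trig_inj[OF s cs] show "(s = s' \<and> t = t') \<or> (s = 0 \<and> s' = 2*pi \<and> t' = -t) \<or> (s = 2*pi \<and> s' = 0 \<and> t' = -t)"
  proof (elim disjE conjE)
    assume ss: "s = s'"
    have a1: "(t - t') * cos (s/2) = 0" using rr unfolding r_def r'_def ss by (simp add: algebra_simps)
    have a2: "(t - t') * sin (s/2) = 0" using e3 unfolding ss by (simp add: algebra_simps)
    have "t = t'"
    proof (rule ccontr)
      assume "t \<noteq> t'"
      then have "cos (s/2) = 0" "sin (s/2) = 0" using a1 a2 by auto
      then show False using sin_cos_squared_add[of "s/2"] by simp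
    qed
    then show ?thesis using ss by simp
  next
    assume "s = 0" "s' = 2 * pi"
    then have "r = 2 + t" "r' = 2 - t'" unfolding r_def r'_def by auto
    then show ?thesis using rr \<open>s = 0\<close> \<open>s' = 2 * pi\<close> by auto
  next
    assume "s = 2 * pi" "s' = 0"
    then have "r = 2 - t" "r' = 2 + t'" unfolding r_def r'_def by auto
    then show ?thesis using rr \<open>s' = 0\<close> \<open>s = 2 * pi\<close> by auto
  qed
next
  assume "(s = s' \<and> t = t') \<or> (s = 0 \<and> s' = 2*pi \<and> t' = -t) \<or> (s = 2*pi \<and> s' = 0 \<and> t' = -t)"
  then show "Mb (s, t) = Mb (s', t')" unfolding Mb_def by auto
qed

lemma gO_fiber:
  assumes n: "5 \<le> n" "odd n" and p: "p \<in> Dom n" and q: "q \<in> Dom n"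
  shows "gO n p = gO n q \<longleftrightarrow> R (int n) p q"
proof -
  obtain x y where xy: "p = (x, y)" by fastforce
  obtain x' y' where xy': "q = (x', y')" by fastforce
  have b: "0 \<le> x" "x \<le> real n" "0 \<le> x'" "x' \<le> real n" "0 \<le> y" "y \<le> 1" "0 \<le> y'" "y' \<le> 1"
    using p q xy xy' by (auto simp: Dom_def)
  have n0: "0 < n" using n by simp
  have fl: "flip (int n) z = 1 - z" for z using n(2) unfolding flip_def by simp
  have sr: "0 \<le> (2 * pi / real n) * x" "(2 * pi / real n) * x \<le> 2 * pi"
      "0 \<le> (2 * pi / real n) * x'" "(2 * pi / real n) * x' \<le> 2 * pi"
    using scale_range[OF n0] b by auto
  have tr: "-1 \<le> 2 * y - 1" "2 * y - 1 \<le> 1" "-1 \<le> 2 * y' - 1" "2 * y' - 1 \<le> 1" using b by auto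
  have "gO n p = gO n q \<longleftrightarrow> Mb ((2 * pi / real n) * x, 2 * y - 1) = Mb ((2 * pi / real n) * x', 2 * y' - 1)"
    unfolding gO_def xy xy' by simp
  also have "\<dots> \<longleftrightarrow> R (int n) p q"
    unfolding Mb_inj[OF sr tr] R_def xy xy' fl scale_eq[OF n0] by auto
  finally show ?thesis .
qed




definition S1 :: "int \<Rightarrow> int set \<Rightarrow> bool" where
  "S1 N \<sigma> \<longleftrightarrow> (\<exists>k. \<sigma> = {k mod N}) \<or> (\<exists>k. \<sigma> = {k mod N, (k+1) mod N}) \<or> (\<exists>k. \<sigma> = {k mod N, (k+2) mod N})
     \<or> (\<exists>k. \<sigma> = {k mod N, (k+1) mod N, (k+2) mod N})"

lemma unfold_cc:
  assumes "N = int (n1 + n2 + n3)"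
  shows "\<sigma> \<in> circ_complex n1 n2 n3 \<longleftrightarrow> (\<exists>k. \<sigma> = {k mod N}) \<or> (\<exists>k ni. ni \<in> {n1, n2, n3} \<and> \<sigma> = {k mod N, (k + int ni) mod N})
     \<or> (\<exists>k. \<sigma> = {k mod N, (k + int n1) mod N, (k + int n1 + int n2) mod N})
     \<or> (\<exists>k. \<sigma> = {k mod N, (k - int n1) mod N, (k - int n1 - int n2) mod N})"
  unfolding circ_complex_def Let_def assms[symmetric] Un_iff mem_Collect_eq
  by (intro iffI; elim disjE exE conjE; blast)

lemma target_char:
  assumes n: "5 \<le> NN" and N: "N = int NN"
  shows "\<sigma> \<in> circ_complex 1 1 (NN - 2) \<longleftrightarrow> S1 N \<sigma>"
proof -
  have e: "N = int (1 + 1 + (NN - 2))" using n N by simp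
  have e2: "int (NN - 2) = N - 2" using n N by simp
  note U = unfold_cc[OF e, of \<sigma>]
  show ?thesis
  proof
    assume "\<sigma> \<in> circ_complex 1 1 (NN - 2)"
    then consider (a) k where "\<sigma> = {k mod N}"
      | (b) k ni where "ni \<in> {1, 1, NN - 2}" "\<sigma> = {k mod N, (k + int ni) mod N}"
      | (c) k where "\<sigma> = {k mod N, (k + int 1) mod N, (k + int 1 + int 1) mod N}"
      | (d) k where "\<sigma> = {k mod N, (k - int 1) mod N, (k - int 1 - int 1) mod N}"
      using U by blast
    then show "S1 N \<sigma>"
    proof cases
      case (a) then show ?thesis unfolding S1_def by blast
    next
      case (b)
      show ?thesis
      proof (cases "ni = 1")
        case True
        then have "\<sigma> = {k mod N, (k+1) mod N}" using b by simp
        then show ?thesis unfolding S1_def by blast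
      next
        case False
        then have i: "int ni = N - 2" using b e2 by auto
        have h1: "(k + int ni) mod N = (k + N - 2) mod N" unfolding i by (simp add: algebra_simps)
        have h2: "k mod N = (k + N - 2 + 2) mod N" by simp
        have "\<sigma> = {(k + N - 2) mod N, (k + N - 2 + 2) mod N}" unfolding b(2) h1 h2[symmetric] by auto
        then show ?thesis unfolding S1_def by blast
      qed
    next
      case (c)
      then have "\<sigma> = {k mod N, (k+1) mod N, (k+2) mod N}" by (simp add: add.assoc)
      then show ?thesis unfolding S1_def by blast
    next
      case (d)
      have h1: "(k - int 1) mod N = (k - 2 + 1) mod N" by (simp add: algebra_simps)
      have h2: "(k - int 1 - int 1) mod N = (k - 2) mod N" by (simp add: algebra_simps)
      have h3: "k mod N = (k - 2 + 2) mod N" by simp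
      have "\<sigma> = {(k-2) mod N, (k-2+1) mod N, (k-2+2) mod N}"
        unfolding d h1 h2 h3[symmetric] by auto
      then show ?thesis unfolding S1_def by blast
    qed
  next
    assume "S1 N \<sigma>"
    then consider (a) k where "\<sigma> = {k mod N}" | (b) k where "\<sigma> = {k mod N, (k+1) mod N}"
      | (c) k where "\<sigma> = {k mod N, (k+2) mod N}" | (d) k where "\<sigma> = {k mod N, (k+1) mod N, (k+2) mod N}"
      unfolding S1_def by blast
    then show "\<sigma> \<in> circ_complex 1 1 (NN - 2)"
    proof cases
      case (a) then show ?thesis using U by blast
    next
      case (b)
      then have "\<sigma> = {k mod N, (k + int 1) mod N}" by simp
      then show ?thesis using U by blast
    next
      case (c)
      have h: "(k + 2 + int (NN - 2)) mod N = k mod N" unfolding e2 by simp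
      have "\<sigma> = {(k+2) mod N, (k + 2 + int (NN - 2)) mod N}" unfolding c h by auto
      then show ?thesis using U by blast
    next
      case (d)
      then have "\<sigma> = {k mod N, (k + int 1) mod N, (k + int 1 + int 1) mod N}" by (simp add: add.assoc)
      then show ?thesis using U by blast
    qed
  qed
qed




definition pm :: "int \<Rightarrow> int \<Rightarrow> int \<Rightarrow> int" where
  "pm N c u = (if 0 \<le> u \<and> u < N then (c * u) mod N else u)"

lemma pm_mod: "0 < N \<Longrightarrow> pm N c (x mod N) = (c * x) mod N"
  unfolding pm_def by (simp add: mod_mult_right_eq)

lemma pm_inv:
  assumes N: "0 < N" and cd: "(c * d) mod N = 1 mod N"
  shows "pm N d (pm N c u) = u"
proof (cases "0 \<le> u \<and> u < N")
  case True
  have "pm N d (pm N c u) = pm N d ((c * u) mod N)" using True unfolding pm_def by simp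
  also have "\<dots> = (d * (c * u)) mod N" by (rule pm_mod[OF N])
  also have "\<dots> = ((c * d) * u) mod N" by (simp add: ac_simps)
  also have "\<dots> = ((c * d) mod N * u) mod N" by (rule mod_mult_left_eq[symmetric])
  also have "\<dots> = (1 mod N * u) mod N" using cd by simp
  also have "\<dots> = u mod N" by (simp add: mod_mult_left_eq)
  also have "\<dots> = u" using True by simp
  finally show ?thesis .
next
  case False then show ?thesis unfolding pm_def by auto
qed

lemma cadd:
  fixes c n N r x :: int
  assumes "(c * n) mod N = r mod N" shows "(c * (x + n)) mod N = (c * x + r) mod N"
proof -
  have "(c * (x + n)) mod N = (c * x + (c * n) mod N) mod N" by (simp add: distrib_left mod_add_right_eq)
  also have "\<dots> = (c * x + r mod N) mod N" using assms by simp
  also have "\<dots> = (c * x + r) mod N" by (simp add: mod_add_right_eq)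
  finally show ?thesis .
qed

lemma csub:
  fixes c n N r x :: int
  assumes "(c * n) mod N = r mod N" shows "(c * (x - n)) mod N = (c * x - r) mod N"
proof -
  have "(c * (x - n)) mod N = (c * x - (c * n) mod N) mod N" by (simp add: right_diff_distrib mod_diff_right_eq)
  also have "\<dots> = (c * x - r mod N) mod N" using assms by simp
  also have "\<dots> = (c * x - r) mod N" by (simp add: mod_diff_right_eq)
  finally show ?thesis .
qed

lemma S1_1: "S1 N {k mod N}" unfolding S1_def by blast
lemma S1_e1: "S1 N {k mod N, (k+1) mod N}" unfolding S1_def by blast
lemma S1_e2: "S1 N {k mod N, (k+2) mod N}" unfolding S1_def by blast
lemma S1_t: "S1 N {k mod N, (k+1) mod N, (k+2) mod N}" unfolding S1_def by blast

lemma src_char: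
  assumes NN: "NN = n1 + n2 + n3" "5 \<le> NN" and N: "N = int NN"
    and r: "r1 = 1 \<or> r1 = 2"
    and c1: "(c * int n1) mod N = r1 mod N" and c2: "(c * (int n1 + int n2)) mod N = (3 - r1) mod N"
    and cd: "(c * d) mod N = 1 mod N"
  shows "\<sigma> \<in> (`) (pm N c) ` circ_complex n1 n2 n3 \<longleftrightarrow> S1 N \<sigma>"
proof -
  have N0: "0 < N" using NN N by simp
  have c2': "(c * int n2) mod N = (3 - 2 * r1) mod N"
  proof -
    have "(c * int n2) mod N = (c * (int n1 + int n2) - c * int n1) mod N" by (simp add: algebra_simps)
    also have "\<dots> = ((c * (int n1 + int n2)) mod N - (c * int n1) mod N) mod N" by (simp add: mod_diff_eq)
    also have "\<dots> = ((3 - r1) mod N - r1 mod N) mod N" using c1 c2 by simp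
    also have "\<dots> = ((3 - r1) - r1) mod N" by (simp add: mod_diff_eq)
    finally show ?thesis by simp
  qed
  have c3: "(c * int n3) mod N = (r1 - 3) mod N"
  proof -
    have "(c * int n3) mod N = (c * N - c * (int n1 + int n2)) mod N" using NN N by (simp add: algebra_simps)
    also have "\<dots> = ((c * N) mod N - (c * (int n1 + int n2)) mod N) mod N" by (rule mod_diff_eq[symmetric])
    also have "\<dots> = (0 - (3 - r1) mod N) mod N" using c2 by simp
    also have "\<dots> = (0 - (3 - r1)) mod N" by (rule mod_diff_right_eq)
    finally show ?thesis by simp
  qed
  have c12: "(c * int n1 + c * int n2) mod N = (3 - r1) mod N" using c2 by (simp add: distrib_left)
  have F1: "(c * (x + int n1)) mod N = (c * x + r1) mod N" for x using cadd[OF c1] .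
  have F2: "(c * (x + int n2)) mod N = (c * x + (3 - 2 * r1)) mod N" for x using cadd[OF c2'] .
  have F3: "(c * (x + int n3)) mod N = (c * x + (r1 - 3)) mod N" for x using cadd[OF c3] .
  have F4: "(c * (x + int n1 + int n2)) mod N = (c * x + (3 - r1)) mod N" for x
    using cadd[OF c2, of x] by (simp add: add.assoc)
  have F5: "(c * (x - int n1)) mod N = (c * x - r1) mod N" for x using csub[OF c1] .
  have F6: "(c * (x - int n1 - int n2)) mod N = (c * x - (3 - r1)) mod N" for x
    using csub[OF c2, of x] by (simp add: diff_diff_eq)
  have G: "(c * (d * k) + s) mod N = (k + s) mod N" for k s
  proof -
    have "(c * (d * k)) mod N = k mod N"
    proof -
      have "(c * (d * k)) mod N = ((c * d) * k) mod N" by (simp add: ac_simps)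
      also have "\<dots> = ((c * d) mod N * k) mod N" by (rule mod_mult_left_eq[symmetric])
      also have "\<dots> = k mod N" using cd by (simp add: mod_mult_left_eq)
      finally show ?thesis .
    qed
    then have "(c * (d * k) + s) mod N = (k mod N + s) mod N" by (metis mod_add_left_eq)
    then show ?thesis by (simp add: mod_add_left_eq)
  qed
  have G0: "(c * (d * k)) mod N = k mod N" for k using G[of k 0] by simp
  have Gm: "(c * (d * k) - s) mod N = (k - s) mod N" for k s using G[of k "-s"] by simp
  note U = unfold_cc[OF N[unfolded NN(1)]]
  note pmm = pm_mod[OF N0]
  have mem1: "{x mod N} \<in> circ_complex n1 n2 n3" for x
    by (rule U[THEN iffD2]) (rule disjI1, rule exI, rule refl)
  have mem2: "{x mod N, (x + int ni) mod N} \<in> circ_complex n1 n2 n3" if "ni \<in> {n1, n2, n3}" for x ni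
    by (rule U[THEN iffD2]) (rule disjI2, rule disjI1, use that in blast)
  have mem3: "{x mod N, (x + int n1) mod N, (x + int n1 + int n2) mod N} \<in> circ_complex n1 n2 n3" for x
    by (rule U[THEN iffD2]) (rule disjI2, rule disjI2, rule disjI1, rule exI, rule refl)
  show ?thesis
  proof
    assume "\<sigma> \<in> (`) (pm N c) ` circ_complex n1 n2 n3"
    then obtain \<tau> where \<tau>: "\<tau> \<in> circ_complex n1 n2 n3" "\<sigma> = pm N c ` \<tau>" by blast
    then consider (a) x where "\<tau> = {x mod N}"
      | (b) x ni where "ni \<in> {n1, n2, n3}" "\<tau> = {x mod N, (x + int ni) mod N}"
      | (c) x where "\<tau> = {x mod N, (x + int n1) mod N, (x + int n1 + int n2) mod N}"
      | (d) x where "\<tau> = {x mod N, (x - int n1) mod N, (x - int n1 - int n2) mod N}"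
      using U[of \<tau>] \<tau>(1) by blast
    then show "S1 N \<sigma>"
    proof cases
      case (a) then show ?thesis using \<tau>(2) S1_1 by (simp add: pmm)
    next
      case (b)
      consider "ni = n1" | "ni = n2" | "ni = n3" using b(1) by blast
      then show ?thesis
      proof cases
        case 1
        then have s: "\<sigma> = {(c*x) mod N, (c*x + r1) mod N}" using \<tau>(2) b(2) by (simp add: pmm F1)
        show ?thesis using r S1_e1[of N "c*x"] S1_e2[of N "c*x"] unfolding s by auto
      next
        case 2
        then have s: "\<sigma> = {(c*x) mod N, (c*x + (3 - 2 * r1)) mod N}" using \<tau>(2) b(2) by (simp add: pmm F2)
        show ?thesis using r S1_e1[of N "c*x"] S1_e1[of N "c*x - 1"] unfolding s by (auto simp: insert_commute)
      next
        case 3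
        then have s: "\<sigma> = {(c*x) mod N, (c*x + (r1 - 3)) mod N}" using \<tau>(2) b(2) by (simp add: pmm F3)
        show ?thesis using r S1_e2[of N "c*x - 2"] S1_e1[of N "c*x - 1"] unfolding s by (auto simp: insert_commute)
      qed
    next
      case (c)
      then have s: "\<sigma> = {(c*x) mod N, (c*x + r1) mod N, (c*x + (3 - r1)) mod N}"
        using \<tau>(2) by (simp add: pmm F1 F4)
      show ?thesis using r S1_t[of N "c*x"] unfolding s by (auto simp: insert_commute)
    next
      case (d)
      then have s: "\<sigma> = {(c*x) mod N, (c*x - r1) mod N, (c*x - (3 - r1)) mod N}"
        using \<tau>(2) by (simp add: pmm F5 F6)
      show ?thesis using r S1_t[of N "c*x - 2"] unfolding s by (auto simp: insert_commute)
    qed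
  next
    assume "S1 N \<sigma>"
    then consider (a) k where "\<sigma> = {k mod N}" | (b) k where "\<sigma> = {k mod N, (k+1) mod N}"
      | (c) k where "\<sigma> = {k mod N, (k+2) mod N}" | (d) k where "\<sigma> = {k mod N, (k+1) mod N, (k+2) mod N}"
      unfolding S1_def by blast
    then show "\<sigma> \<in> (`) (pm N c) ` circ_complex n1 n2 n3"
    proof cases
      case (a)
      have "{(d*k) mod N} \<in> circ_complex n1 n2 n3" by (rule mem1)
      moreover have "pm N c ` {(d*k) mod N} = \<sigma>" using a by (simp add: pmm G0)
      ultimately show ?thesis by blast
    next
      case (b)
      show ?thesis
      proof (cases "r1 = 1")
        case True
        have "{(d*k) mod N, (d*k + int n1) mod N} \<in> circ_complex n1 n2 n3" by (rule mem2) simp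
        moreover have "pm N c ` {(d*k) mod N, (d*k + int n1) mod N} = \<sigma>"
          using b True by (simp add: pmm F1 G G0)
        ultimately show ?thesis by blast
      next
        case False
        then have r2: "r1 = 2" using r by simp
        have "{(d*(k+1)) mod N, (d*(k+1) + int n3) mod N} \<in> circ_complex n1 n2 n3" by (rule mem2) simp
        moreover have "pm N c ` {(d*(k+1)) mod N, (d*(k+1) + int n3) mod N} = \<sigma>"
          using b r2 by (simp add: pmm F3 G G0 Gm insert_commute)
        ultimately show ?thesis by blast
      qed
    next
      case (c)
      show ?thesis
      proof (cases "r1 = 2")
        case True
        have "{(d*k) mod N, (d*k + int n1) mod N} \<in> circ_complex n1 n2 n3" by (rule mem2) simp
        moreover have "pm N c ` {(d*k) mod N, (d*k + int n1) mod N} = \<sigma>"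
          using c True by (simp add: pmm F1 G G0)
        ultimately show ?thesis by blast
      next
        case False
        then have r2: "r1 = 1" using r by simp
        have "{(d*(k+2)) mod N, (d*(k+2) + int n3) mod N} \<in> circ_complex n1 n2 n3" by (rule mem2) simp
        moreover have "pm N c ` {(d*(k+2)) mod N, (d*(k+2) + int n3) mod N} = \<sigma>"
          using c r2 by (simp add: pmm F3 G G0 Gm insert_commute)
        ultimately show ?thesis by blast
      qed
    next
      case (d)
      have "{(d*k) mod N, (d*k + int n1) mod N, (d*k + int n1 + int n2) mod N} \<in> circ_complex n1 n2 n3"
        by (rule mem3)
      moreover have "pm N c ` {(d*k) mod N, (d*k + int n1) mod N, (d*k + int n1 + int n2) mod N} = \<sigma>"
        using d r by (auto simp: pmm F1 F4 G G0 insert_commute)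
      ultimately show ?thesis by blast
    qed
  qed
qed




lemma Dom_compact: "compact (Dom n)"
  unfolding Dom_def by (intro compact_Times compact_Icc)

lemma strip_homeo:
  assumes n: "5 \<le> n"
  shows "(even n \<longrightarrow> geom_real (circ_complex 1 1 (n - 2)) homeomorphic cylinder)
       \<and> (odd n \<longrightarrow> geom_real (circ_complex 1 1 (n - 2)) homeomorphic moebius_band)"
proof (intro conjI impI)
  have n0: "0 < n" using n by simp
  assume e: "even n"
  have "Phi (int n) ` Dom n homeomorphic gE n ` Dom n"
    by (rule quotient_homeo[OF Dom_compact Phi_cont gE_cont])
       (simp add: Phi_fiber[OF n] gE_fiber[OF n e])
  then show "geom_real (circ_complex 1 1 (n - 2)) homeomorphic cylinder"
    unfolding Phi_image[OF n] gE_image[OF n0] .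
next
  have n0: "0 < n" using n by simp
  assume e: "odd n"
  have "Phi (int n) ` Dom n homeomorphic gO n ` Dom n"
    by (rule quotient_homeo[OF Dom_compact Phi_cont gO_cont])
       (simp add: Phi_fiber[OF n] gO_fiber[OF n e])
  then show "geom_real (circ_complex 1 1 (n - 2)) homeomorphic moebius_band"
    unfolding Phi_image[OF n] gO_image[OF n0] .
qed

lemma relabeled:
  assumes NN: "NN = n1 + n2 + n3" "5 \<le> NN" and N: "N = int NN"
    and r: "r1 = 1 \<or> r1 = 2"
    and c1: "(c * int n1) mod N = r1 mod N" and c2: "(c * (int n1 + int n2)) mod N = (3 - r1) mod N"
    and cd: "(c * d) mod N = 1 mod N"
  shows "(even NN \<longrightarrow> geom_real (circ_complex n1 n2 n3) homeomorphic cylinder)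
       \<and> (odd NN \<longrightarrow> geom_real (circ_complex n1 n2 n3) homeomorphic moebius_band)"
proof -
  have N0: "0 < N" using NN N by simp
  have dc: "(d * c) mod N = 1 mod N" using cd by (simp add: mult.commute)
  have img: "(`) (pm N c) ` circ_complex n1 n2 n3 = circ_complex 1 1 (NN - 2)"
  proof (rule set_eqI)
    fix \<sigma> show "\<sigma> \<in> (`) (pm N c) ` circ_complex n1 n2 n3 \<longleftrightarrow> \<sigma> \<in> circ_complex 1 1 (NN - 2)"
      unfolding src_char[OF NN N r c1 c2 cd] target_char[OF NN(2) N] ..
  qed
  have "geom_real (circ_complex n1 n2 n3) homeomorphic geom_real ((`) (pm N c) ` circ_complex n1 n2 n3)"
    by (rule geom_real_relabel[of "pm N d"]) (rule pm_inv[OF N0 cd], rule pm_inv[OF N0 dc])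
  then have h: "geom_real (circ_complex n1 n2 n3) homeomorphic geom_real (circ_complex 1 1 (NN - 2))"
    unfolding img .
  have s: "(even NN \<longrightarrow> geom_real (circ_complex 1 1 (NN - 2)) homeomorphic cylinder)
       \<and> (odd NN \<longrightarrow> geom_real (circ_complex 1 1 (NN - 2)) homeomorphic moebius_band)"
    by (rule strip_homeo[OF NN(2)])
  show ?thesis
  proof (intro conjI impI)
    assume "even NN" then show "geom_real (circ_complex n1 n2 n3) homeomorphic cylinder"
      using s homeomorphic_trans[OF h] by simp
  next
    assume "odd NN" then show "geom_real (circ_complex n1 n2 n3) homeomorphic moebius_band"
      using s homeomorphic_trans[OF h] by simp
  qed
qed

lemma inverse_exists:
  fixes a :: int
  assumes "gcd a N = 1"
  shows "\<exists>e. (e * a) mod N = 1 mod N"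
proof -
  obtain u v where "u * a + v * N = gcd a N" using bezout_int by blast
  then have "u * a - 1 = (- v) * N" using assms by simp
  then have "N dvd u * a - 1" by simp
  then show ?thesis by (auto simp: mod_eq_dvd_iff)
qed

theorem theorem6p10:
  fixes n k :: nat
  assumes "0 < n" and "0 < k" and "coprime n k"
  shows "(let N = 3 * n + k in
           2 * (n + k) \<noteq> N \<longrightarrow>
             (if even N then geom_real (circ_complex n n (n + k)) homeomorphic cylinder
              else geom_real (circ_complex n n (n + k)) homeomorphic moebius_band))
       \<and> (let N = 3 * n + 2 * k in
             (if even N then geom_real (circ_complex n (n + k) (n + k)) homeomorphic cylinder
              else geom_real (circ_complex n (n + k) (n + k)) homeomorphic moebius_band))"
proof -
  have cop: "gcd (int n) (int k) = 1" using assms(3) by (simp add: coprime_iff_gcd_eq_1[symmetric])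
  have A: "2 * (n + k) \<noteq> 3 * n + k \<longrightarrow>
             (if even (3 * n + k) then geom_real (circ_complex n n (n + k)) homeomorphic cylinder
              else geom_real (circ_complex n n (n + k)) homeomorphic moebius_band)"
  proof
    assume ne: "2 * (n + k) \<noteq> 3 * n + k"
    define NN where "NN = n + n + (n + k)"
    define N where "N = int NN"
    have NN5: "5 \<le> NN" using ne assms unfolding NN_def by auto
    have NN3: "NN = 3 * n + k" unfolding NN_def by simp
    have g: "gcd (int n) N = 1"
    proof -
      have "N = 3 * int n + int k" unfolding N_def NN_def by simp
      then show ?thesis using gcd_add_mult[of "int n" 3 "int k"] cop by simp
    qed
    obtain c where c: "(c * int n) mod N = 1 mod N" using inverse_exists[OF g] by blast
    have c2: "(c * (int n + int n)) mod N = (3 - 1) mod N"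
    proof -
      have "(c * (int n + int n)) mod N = (c * int n + c * int n) mod N"
        by (simp only: distrib_left)
      also have "\<dots> = ((c * int n) mod N + (c * int n) mod N) mod N"
        by (rule mod_add_eq[symmetric])
      also have "\<dots> = (1 mod N + 1 mod N) mod N" using c by simp
      also have "\<dots> = (1 + 1) mod N" by (rule mod_add_eq)
      also have "\<dots> = (3 - 1) mod N" by simp
      finally show ?thesis .
    qed
    have R: "(even NN \<longrightarrow> geom_real (circ_complex n n (n + k)) homeomorphic cylinder)
       \<and> (odd NN \<longrightarrow> geom_real (circ_complex n n (n + k)) homeomorphic moebius_band)"
      by (rule relabeled[OF NN_def NN5 N_def _ _ c2 c]) (use c in auto)
    then show "if even (3 * n + k) then geom_real (circ_complex n n (n + k)) homeomorphic cylinder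
              else geom_real (circ_complex n n (n + k)) homeomorphic moebius_band"
      unfolding NN3 by simp
  qed
  have B: "if even (3 * n + 2 * k) then geom_real (circ_complex n (n + k) (n + k)) homeomorphic cylinder
              else geom_real (circ_complex n (n + k) (n + k)) homeomorphic moebius_band"
  proof -
    define NN where "NN = n + (n + k) + (n + k)"
    define N where "N = int NN"
    define m where "m = int n + int k"
    have NN5: "5 \<le> NN" using assms unfolding NN_def by auto
    have NN3: "NN = 3 * n + 2 * k" unfolding NN_def by simp
    have Nm: "N = 2 * m + int n" unfolding N_def NN_def m_def by simp
    have g: "gcd m N = 1"
    proof -
      have "gcd m N = gcd m (int n)" unfolding Nm using gcd_add_mult[of m 2 "int n"] by simp
      also have "\<dots> = gcd (int k + int n) (int n)" unfolding m_def by (simp add: add.commute)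
      also have "\<dots> = gcd (int k) (int n)" by simp
      also have "\<dots> = 1" using cop by (simp add: gcd.commute)
      finally show ?thesis .
    qed
    obtain e where e: "(e * m) mod N = 1 mod N" using inverse_exists[OF g] by blast
    then have de: "N dvd e * m - 1" by (simp add: mod_eq_dvd_iff)
    have c1: "((- e) * int n) mod N = 2 mod N"
    proof -
      have eq: "(- e) * int n - 2 = N * (- e) + 2 * (e * m - 1)" unfolding Nm by (simp add: algebra_simps)
      have "N dvd N * (- e) + 2 * (e * m - 1)" by (intro dvd_add dvd_triv_left dvd_mult[OF de])
      then have "N dvd (- e) * int n - 2" unfolding eq .
      then show ?thesis by (simp add: mod_eq_dvd_iff)
    qed
    have c2: "((- e) * (int n + int (n + k))) mod N = (3 - 2) mod N"
    proof -
      have eq: "(- e) * (int n + int (n + k)) - (3 - 2) = N * (- e) + (e * m - 1)" unfolding Nm m_def by (simp add: algebra_simps)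
      have "N dvd N * (- e) + (e * m - 1)" by (intro dvd_add dvd_triv_left de)
      then have "N dvd (- e) * (int n + int (n + k)) - (3 - 2)" unfolding eq .
      then show ?thesis by (simp add: mod_eq_dvd_iff)
    qed
    have cd: "((- e) * (- m)) mod N = 1 mod N" using e by simp
    have R: "(even NN \<longrightarrow> geom_real (circ_complex n (n + k) (n + k)) homeomorphic cylinder)
       \<and> (odd NN \<longrightarrow> geom_real (circ_complex n (n + k) (n + k)) homeomorphic moebius_band)"
      by (rule relabeled[OF NN_def NN5 N_def _ c1 c2 cd]) simp
    then show ?thesis unfolding NN3 by simp
  qed
  show ?thesis unfolding Let_def using A B by blast
qed


end
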